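(* Let $(D,\dagger)$ be a division $\mathbb{Q}$-algebra with positive involution of Albert type III or IV. In type III let $\alpha^{-1}\colon(\mathbb{H}^e,t)\to(D_\mathbb{R},\dagger)$ be an isomorphism of $\mathbb{R}$-algebras with involution, where $t$ is the canonical (quaternion conjugation) involution on each factor; in type IV let $\alpha^{-1}\colon(\mathrm{M}_d(\mathbb{C})^e,t)\to(D_\mathbb{R},\dagger)$ be an isomorphism of $\mathbb{R}$-algebras with involution, where $t$ is conjugate-transpose on each factor. Let $V$ be a left $D$-vector space with a non-degenerate $(D,\dagger)$-skew-Hermitian form $\psi$, and let $v_1,\dots,v_m$ be a weakly unitary $D$-basis of $V$. Then there exist $s_1,\dots,s_m\in D_\mathbb{R}^\times$ such that the vectors $s_1^{-1}v_1,\dots,s_m^{-1}v_m$ form a weakly unitary $D_\mathbb{R}$-basis of $V_\mathbb{R}$ (with respect to the $\mathbb{R}$-linear extension of $\psi$) satisfying: in type III, $\alpha(\psi(s_j^{-1}v_j,s_j^{-1}v_j))=(i,\dots,i)\in\mathbb{H}^e$ for all $j$; in type IV, for each $j$, $\alpha(\psi(s_j^{-1}v_j,s_j^{-1}v_j))=(\varepsilon_{1j},\dots,\varepsilon_{ej})$ where each $\varepsilon_{lj}$ is a $d\times d$ diagonal matrix with diagonal entries in $\{i,-i\}$; and moreover, for all $j$, \[\lvert s_j\rvert_D\le(2ke)^{1/4}\lvert\psi(v_j,v_j)\rvert_D^{1/2},\] where $k=1$ in type III and $k=d$ in type IV.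
   Context: Type III: $D$ is a totally definite quaternion algebra over a totally real field $F$, $e=[F:\mathbb{Q}]$, $D_\mathbb{R}\cong\mathbb{H}^e$, $\dagger$ the canonical involution. Type IV: the centre $F$ is a CM field, $[F:\mathbb{Q}]=2e$, $d=\sqrt{\dim_F D}$, $D_\mathbb{R}\cong\mathrm{M}_d(\mathbb{C})^e$, and $\dagger$ restricts to complex conjugation on $F$. $D_\mathbb{R}=D\otimes_\mathbb{Q}\mathbb{R}$, $V_\mathbb{R}=V\otimes_\mathbb{Q}\mathbb{R}$, and $\lvert a\rvert_D=\sqrt{\mathrm{Trd}_{D_\mathbb{R}/\mathbb{R}}(aa^\dagger)}$. A $(D,\dagger)$-skew-Hermitian form satisfies $\psi(y,x)=-\psi(x,y)^\dagger$, $\psi(ax,by)=a\psi(x,y)b^\dagger$; non-degenerate means for every $x\ne0$ some $y$ has $\psi(x,y)\ne0$. A basis is weakly unitary if $\psi(v_i,v_j)=0$ for $i\neq j$. *)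

theory Defs
  imports "HOL-Analysis.Analysis"
begin

datatype quat = Quat (qre: real) (qi: real) (qj: real) (qk: real)

definition qzero :: quat where "qzero = Quat 0 0 0 0"
definition qone :: quat where "qone = Quat 1 0 0 0"
definition q_i :: quat where "q_i = Quat 0 1 0 0"
definition qadd :: "quat \<Rightarrow> quat \<Rightarrow> quat" where
  "qadd p q = Quat (qre p + qre q) (qi p + qi q) (qj p + qj q) (qk p + qk q)"
definition qscale :: "real \<Rightarrow> quat \<Rightarrow> quat" where
  "qscale c q = Quat (c * qre q) (c * qi q) (c * qj q) (c * qk q)"
definition qmul :: "quat \<Rightarrow> quat \<Rightarrow> quat" where
  "qmul p q = Quat
     (qre p * qre q - qi p * qi q - qj p * qj q - qk p * qk q)
     (qre p * qi q + qi p * qre q + qj p * qk q - qk p * qj q)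
     (qre p * qj q - qi p * qk q + qj p * qre q + qk p * qi q)
     (qre p * qk q + qi p * qj q - qj p * qi q + qk p * qre q)"
definition qconj :: "quat \<Rightarrow> quat" where
  "qconj q = Quat (qre q) (- qi q) (- qj q) (- qk q)"

definition cadj :: "complex^'n^'n \<Rightarrow> complex^'n^'n" where
  "cadj M = (\<chi> i j. cnj (M $ j $ i))"

definition left_module :: "('a::ring_1 \<Rightarrow> 'v::ab_group_add \<Rightarrow> 'v) \<Rightarrow> bool" where
  "left_module sm \<longleftrightarrow>
     (\<forall>a x y. sm a (x + y) = sm a x + sm a y) \<and>
     (\<forall>a b x. sm (a + b) x = sm a x + sm b x) \<and>
     (\<forall>a b x. sm (a * b) x = sm a (sm b x)) \<and>
     (\<forall>x. sm 1 x = x)"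

definition is_basis :: "('a::ring_1 \<Rightarrow> 'v::ab_group_add \<Rightarrow> 'v) \<Rightarrow> nat \<Rightarrow> (nat \<Rightarrow> 'v) \<Rightarrow> bool" where
  "is_basis sm m w \<longleftrightarrow>
     (\<forall>c. (\<Sum>j<m. sm (c j) (w j)) = 0 \<longrightarrow> (\<forall>j<m. c j = 0)) \<and>
     (\<forall>x. \<exists>c. x = (\<Sum>j<m. sm (c j) (w j)))"

definition weakly_unitary :: "('v \<Rightarrow> 'v \<Rightarrow> 'a::zero) \<Rightarrow> nat \<Rightarrow> (nat \<Rightarrow> 'v) \<Rightarrow> bool" where
  "weakly_unitary \<psi> m w \<longleftrightarrow> (\<forall>i<m. \<forall>j<m. i \<noteq> j \<longrightarrow> \<psi> (w i) (w j) = 0)"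

definition involution :: "('d::ring_1 \<Rightarrow> 'd) \<Rightarrow> bool" where
  "involution dag \<longleftrightarrow> (\<forall>x y. dag (x + y) = dag x + dag y) \<and>
     (\<forall>x y. dag (x * y) = dag y * dag x) \<and> (\<forall>x. dag (dag x) = x)"

definition skew_hermitian :: "('d::ring_1 \<Rightarrow> 'd) \<Rightarrow> ('d \<Rightarrow> 'v::ab_group_add \<Rightarrow> 'v) \<Rightarrow> ('v \<Rightarrow> 'v \<Rightarrow> 'd) \<Rightarrow> bool" where
  "skew_hermitian dag sm \<psi> \<longleftrightarrow>
     (\<forall>x x' y. \<psi> (x + x') y = \<psi> x y + \<psi> x' y) \<and>
     (\<forall>x y y'. \<psi> x (y + y') = \<psi> x y + \<psi> x y') \<and>
     (\<forall>a b x y. \<psi> (sm a x) (sm b y) = a * \<psi> x y * dag b) \<and>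
     (\<forall>x y. \<psi> y x = - dag (\<psi> x y))"

definition nondegenerate :: "('v::zero \<Rightarrow> 'v \<Rightarrow> 'd::zero) \<Rightarrow> bool" where
  "nondegenerate \<psi> \<longleftrightarrow> (\<forall>x. x \<noteq> 0 \<longrightarrow> (\<exists>y. \<psi> x y \<noteq> 0))"

text \<open>canonical embedding of \<open>\<rat>\<close> into a division ring of characteristic 0
  (the library's \<open>of_rat\<close> needs commutativity)\<close>
definition rat_emb :: "rat \<Rightarrow> 'd::division_ring" where
  "rat_emb q = of_int (fst (quotient_of q)) / of_int (snd (quotient_of q))"

definition rat_basis :: "'d::division_ring set \<Rightarrow> bool" where
  "rat_basis B \<longleftrightarrow> finite B \<and>
     (\<forall>c. (\<Sum>b\<in>B. rat_emb (c b) * b) = 0 \<longrightarrow> (\<forall>b\<in>B. c b = 0)) \<and>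
     (\<forall>x. \<exists>c. x = (\<Sum>b\<in>B. rat_emb (c b) * b))"

text \<open>\<open>\<iota> : D \<rightarrow> R\<close> realises \<open>R\<close> as \<open>D \<otimes>\<^sub>\<rat> \<real>\<close>: a ring homomorphism mapping some
  \<open>\<rat>\<close>-basis of \<open>D\<close> injectively onto an \<open>\<real>\<close>-basis of \<open>R\<close>.\<close>
definition real_scalar_extension :: "('d::division_ring \<Rightarrow> 'r::real_algebra_1) \<Rightarrow> bool" where
  "real_scalar_extension \<iota> \<longleftrightarrow>
     (\<forall>x y. \<iota> (x + y) = \<iota> x + \<iota> y) \<and> (\<forall>x y. \<iota> (x * y) = \<iota> x * \<iota> y) \<and> \<iota> 1 = 1 \<and>
     (\<exists>B. rat_basis B \<and> inj_on \<iota> B \<and> independent (\<iota> ` B) \<and> span (\<iota> ` B) = UNIV)"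

definition real_ext_inv :: "('d \<Rightarrow> 'd) \<Rightarrow> ('d \<Rightarrow> 'r::real_algebra_1) \<Rightarrow> ('r \<Rightarrow> 'r) \<Rightarrow> bool" where
  "real_ext_inv dag \<iota> dagR \<longleftrightarrow> linear dagR \<and> (\<forall>x. dagR (\<iota> x) = \<iota> (dag x))"

text \<open>\<open>V\<^sub>\<real> = V \<otimes>\<^sub>\<rat> \<real> = D\<^sub>\<real> \<otimes>\<^sub>D V\<close>: \<open>j : V \<rightarrow> W\<close> is \<open>\<iota>\<close>-semilinear and maps the
  \<open>D\<close>-basis \<open>v\<close> of \<open>V\<close> to a \<open>D\<^sub>\<real>\<close>-basis of \<open>W\<close>.\<close>
definition real_module_extension ::
  "('d::ring_1 \<Rightarrow> 'r::real_algebra_1) \<Rightarrow> ('d \<Rightarrow> 'v::ab_group_add \<Rightarrow> 'v) \<Rightarrow>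
   ('r \<Rightarrow> 'w::ab_group_add \<Rightarrow> 'w) \<Rightarrow> ('v \<Rightarrow> 'w) \<Rightarrow> nat \<Rightarrow> (nat \<Rightarrow> 'v) \<Rightarrow> bool" where
  "real_module_extension \<iota> sm smR j m v \<longleftrightarrow> left_module smR \<and>
     (\<forall>x y. j (x + y) = j x + j y) \<and> (\<forall>a x. j (sm a x) = smR (\<iota> a) (j x)) \<and>
     is_basis smR m (\<lambda>i. j (v i))"

definition real_form_extension ::
  "('d \<Rightarrow> 'r::real_algebra_1) \<Rightarrow> ('r \<Rightarrow> 'w::ab_group_add \<Rightarrow> 'w) \<Rightarrow> ('v \<Rightarrow> 'w) \<Rightarrow>
   ('v \<Rightarrow> 'v \<Rightarrow> 'd) \<Rightarrow> ('w \<Rightarrow> 'w \<Rightarrow> 'r) \<Rightarrow> bool" where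
  "real_form_extension \<iota> smR j \<psi> \<psi>R \<longleftrightarrow>
     (\<forall>x x' y. \<psi>R (x + x') y = \<psi>R x y + \<psi>R x' y) \<and>
     (\<forall>x y y'. \<psi>R x (y + y') = \<psi>R x y + \<psi>R x y') \<and>
     (\<forall>c x y. \<psi>R (smR (of_real c) x) y = of_real c * \<psi>R x y) \<and>
     (\<forall>c x y. \<psi>R x (smR (of_real c) y) = \<psi>R x y * of_real c) \<and>
     (\<forall>x y. \<psi>R (j x) (j y) = \<iota> (\<psi> x y))"

definition iso_III :: "('r::real_algebra_1 \<Rightarrow> 'r) \<Rightarrow> ('r \<Rightarrow> ('e::finite \<Rightarrow> quat)) \<Rightarrow> bool" where
  "iso_III dagR \<alpha> \<longleftrightarrow> bij \<alpha> \<and>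
     (\<forall>x y. \<alpha> (x + y) = (\<lambda>l. qadd (\<alpha> x l) (\<alpha> y l))) \<and>
     (\<forall>c x. \<alpha> (scaleR c x) = (\<lambda>l. qscale c (\<alpha> x l))) \<and>
     (\<forall>x y. \<alpha> (x * y) = (\<lambda>l. qmul (\<alpha> x l) (\<alpha> y l))) \<and>
     \<alpha> 1 = (\<lambda>l. qone) \<and>
     (\<forall>x. \<alpha> (dagR x) = (\<lambda>l. qconj (\<alpha> x l)))"

text \<open>Reduced trace \<open>Trd\<^sub>D\<^sub>\<^sub>\<real>\<^sub>/\<^sub>\<real>\<close>, computed through \<open>\<alpha>\<close> (\<open>Trd\<^sub>\<bbbH>\<^sub>/\<^sub>\<real>(q) = 2 Re q\<close>)\<close>
definition Trd_III :: "('r \<Rightarrow> ('e::finite \<Rightarrow> quat)) \<Rightarrow> 'r \<Rightarrow> real" where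
  "Trd_III \<alpha> x = (\<Sum>l\<in>UNIV. 2 * qre (\<alpha> x l))"

definition norm_III :: "('r::real_algebra_1 \<Rightarrow> 'r) \<Rightarrow> ('r \<Rightarrow> ('e::finite \<Rightarrow> quat)) \<Rightarrow> 'r \<Rightarrow> real" where
  "norm_III dagR \<alpha> a = sqrt (Trd_III \<alpha> (a * dagR a))"

definition iso_IV :: "('r::real_algebra_1 \<Rightarrow> 'r) \<Rightarrow> ('r \<Rightarrow> ('e::finite \<Rightarrow> complex^'n^'n)) \<Rightarrow> bool" where
  "iso_IV dagR \<alpha> \<longleftrightarrow> bij \<alpha> \<and>
     (\<forall>x y. \<alpha> (x + y) = (\<lambda>l. \<alpha> x l + \<alpha> y l)) \<and>
     (\<forall>c x. \<alpha> (scaleR c x) = (\<lambda>l. scaleR c (\<alpha> x l))) \<and>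
     (\<forall>x y. \<alpha> (x * y) = (\<lambda>l. \<alpha> x l ** \<alpha> y l)) \<and>
     \<alpha> 1 = (\<lambda>l. mat 1) \<and>
     (\<forall>x. \<alpha> (dagR x) = (\<lambda>l. cadj (\<alpha> x l)))"

text \<open>Reduced trace \<open>Trd\<^sub>D\<^sub>\<^sub>\<real>\<^sub>/\<^sub>\<real> = Tr\<^sub>F\<^sub>\<^sub>\<real>\<^sub>/\<^sub>\<real> \<circ> Trd\<close>, computed through \<open>\<alpha>\<close>\<close>
definition Trd_IV :: "('r \<Rightarrow> ('e::finite \<Rightarrow> complex^'n^'n)) \<Rightarrow> 'r \<Rightarrow> real" where
  "Trd_IV \<alpha> x = (\<Sum>l\<in>UNIV. 2 * Re (trace (\<alpha> x l)))"

definition norm_IV :: "('r::real_algebra_1 \<Rightarrow> 'r) \<Rightarrow> ('r \<Rightarrow> ('e::finite \<Rightarrow> complex^'n^'n)) \<Rightarrow> 'r \<Rightarrow> real" where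
  "norm_IV dagR \<alpha> a = sqrt (Trd_IV \<alpha> (a * dagR a))"

end

theory Submission
  imports Defs
begin


lemma lm_zero:
  assumes "left_module sm" shows "sm 0 x = 0" "sm a 0 = 0"
proof -
  have "sm (0+0) x = sm 0 x + sm 0 x" using assms unfolding left_module_def by blast
  thus "sm 0 x = 0" by simp
  have "sm a (0+0) = sm a 0 + sm a 0" using assms unfolding left_module_def by blast
  thus "sm a 0 = 0" by simp
qed

lemma psiR_sesq:
  fixes \<iota> :: "'d::division_ring \<Rightarrow> 'r::real_algebra_1"
  assumes DR: "real_scalar_extension \<iota>"
    and dagR: "real_ext_inv dag \<iota> dagR"
    and psi: "skew_hermitian dag sm \<psi>"
    and VR: "real_module_extension \<iota> sm smR jV m v"
    and psiR: "real_form_extension \<iota> smR jV \<psi> \<psi>R"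
  shows "\<psi>R (smR s (jV u)) (smR s' (jV w)) = s * \<iota> (\<psi> u w) * dagR s'"
proof -
  obtain B where spB: "span (\<iota> ` B) = UNIV" using DR unfolding real_scalar_extension_def by blast
  have imul: "\<And>x y. \<iota> (x*y) = \<iota> x * \<iota> y" using DR unfolding real_scalar_extension_def by blast
  have lin: "linear dagR" and dg: "\<And>x. dagR (\<iota> x) = \<iota> (dag x)" using dagR unfolding real_ext_inv_def by auto
  have smRm: "left_module smR" and jsm: "\<And>a x. jV (sm a x) = smR (\<iota> a) (jV x)"
    using VR unfolding real_module_extension_def by auto
  have smR_add: "\<And>a b x. smR (a + b) x = smR a x + smR b x"
   and smR_mul: "\<And>a b x. smR (a * b) x = smR a (smR b x)"
    using smRm unfolding left_module_def by auto
  have smR0: "\<And>x. smR 0 x = 0" using lm_zero[OF smRm] by simp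
  have pl: "\<And>x x' y. \<psi>R (x + x') y = \<psi>R x y + \<psi>R x' y"
   and pr: "\<And>x y y'. \<psi>R x (y + y') = \<psi>R x y + \<psi>R x y'"
   and psc: "\<And>c x y. \<psi>R (smR (of_real c) x) y = of_real c * \<psi>R x y"
   and psc2: "\<And>c x y. \<psi>R x (smR (of_real c) y) = \<psi>R x y * of_real c"
   and pj: "\<And>x y. \<psi>R (jV x) (jV y) = \<iota> (\<psi> x y)"
    using psiR unfolding real_form_extension_def by auto
  have pl0: "\<And>y. \<psi>R 0 y = 0" using pl[of 0 0] by simp
  have pr0: "\<And>x. \<psi>R x 0 = 0" using pr[of _ 0 0] by simp
  have psm: "\<And>a b x y. \<psi> (sm a x) (sm b y) = a * \<psi> x y * dag b"
    using psi unfolding skew_hermitian_def by blast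
  have step1: "\<psi>R (smR (\<iota> d) (jV u)) (smR (\<iota> d') (jV w)) = \<iota> d * \<iota> (\<psi> u w) * dagR (\<iota> d')"
    for d d' u w
    by (simp add: jsm[symmetric] pj psm imul dg)
  have step2: "\<psi>R (smR s (jV u)) (smR (\<iota> d') (jV w)) = s * \<iota> (\<psi> u w) * dagR (\<iota> d')" for s u w d'
  proof -
    have "s \<in> span (\<iota> ` B)" using spB by simp
    then show ?thesis
    proof (induction arbitrary: u w d' rule: span_induct)
      case base
      show ?case
      proof (rule subspaceI)
        show "0 \<in> {s. \<forall>u w d'. \<psi>R (smR s (jV u)) (smR (\<iota> d') (jV w)) = s * \<iota> (\<psi> u w) * dagR (\<iota> d')}"
          by (simp add: smR0 pl0)
      next
        fix x y assume "x \<in> {s. \<forall>u w d'. \<psi>R (smR s (jV u)) (smR (\<iota> d') (jV w)) = s * \<iota> (\<psi> u w) * dagR (\<iota> d')}"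
          "y \<in> {s. \<forall>u w d'. \<psi>R (smR s (jV u)) (smR (\<iota> d') (jV w)) = s * \<iota> (\<psi> u w) * dagR (\<iota> d')}"
        then show "x + y \<in> {s. \<forall>u w d'. \<psi>R (smR s (jV u)) (smR (\<iota> d') (jV w)) = s * \<iota> (\<psi> u w) * dagR (\<iota> d')}"
          by (simp add: smR_add pl distrib_right)
      next
        fix c x assume "x \<in> {s. \<forall>u w d'. \<psi>R (smR s (jV u)) (smR (\<iota> d') (jV w)) = s * \<iota> (\<psi> u w) * dagR (\<iota> d')}"
        then show "c *\<^sub>R x \<in> {s. \<forall>u w d'. \<psi>R (smR s (jV u)) (smR (\<iota> d') (jV w)) = s * \<iota> (\<psi> u w) * dagR (\<iota> d')}"
          by (simp add: scaleR_conv_of_real smR_mul psc mult.assoc)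
      qed
    next
      case (step x)
      then obtain d where "x = \<iota> d" by blast
      then show ?case by (simp add: step1)
    qed
  qed
  have "s' \<in> span (\<iota> ` B)" using spB by simp
  then show ?thesis
  proof (induction arbitrary: s u w rule: span_induct)
    case base
    show ?case
    proof (rule subspaceI)
      show "0 \<in> {s'. \<forall>s u w. \<psi>R (smR s (jV u)) (smR s' (jV w)) = s * \<iota> (\<psi> u w) * dagR s'}"
        by (simp add: smR0 pr0 linear_0[OF lin])
    next
      fix x y assume "x \<in> {s'. \<forall>s u w. \<psi>R (smR s (jV u)) (smR s' (jV w)) = s * \<iota> (\<psi> u w) * dagR s'}"
        "y \<in> {s'. \<forall>s u w. \<psi>R (smR s (jV u)) (smR s' (jV w)) = s * \<iota> (\<psi> u w) * dagR s'}"
      then show "x + y \<in> {s'. \<forall>s u w. \<psi>R (smR s (jV u)) (smR s' (jV w)) = s * \<iota> (\<psi> u w) * dagR s'}"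
        by (simp add: smR_add pr linear_add[OF lin] distrib_left)
    next
      fix c x assume that: "x \<in> {s'. \<forall>s u w. \<psi>R (smR s (jV u)) (smR s' (jV w)) = s * \<iota> (\<psi> u w) * dagR s'}"
      show "c *\<^sub>R x \<in> {s'. \<forall>s u w. \<psi>R (smR s (jV u)) (smR s' (jV w)) = s * \<iota> (\<psi> u w) * dagR s'}"
      proof (intro CollectI allI)
        fix s u w
        have "\<psi>R (smR s (jV u)) (smR (c *\<^sub>R x) (jV w)) = \<psi>R (smR s (jV u)) (smR (of_real c) (smR x (jV w)))"
          by (simp add: scaleR_conv_of_real smR_mul)
        also have "\<dots> = s * \<iota> (\<psi> u w) * dagR x * of_real c" using that psc2 by simp
        also have "\<dots> = s * \<iota> (\<psi> u w) * dagR (c *\<^sub>R x)"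
          by (simp add: linear_scale[OF lin] of_real_def mult_scaleR_right)
        finally show "\<psi>R (smR s (jV u)) (smR (c *\<^sub>R x) (jV w)) = s * \<iota> (\<psi> u w) * dagR (c *\<^sub>R x)" .
      qed
    qed
  next
    case (step x)
    then obtain d where "x = \<iota> d" by blast
    then show ?case by (simp add: step2)
  qed
qed

lemma basis_transform:
  assumes lm: "left_module smR" and B: "is_basis smR m w"
    and st: "\<forall>j<m. s j * t j = 1 \<and> t j * s j = 1"
  shows "is_basis smR m (\<lambda>j. smR (t j) (w j))"
proof -
  have mul: "\<And>a b x. smR (a * b) x = smR a (smR b x)" using lm unfolding left_module_def by auto
  have one: "\<And>x. smR 1 x = x" using lm unfolding left_module_def by auto
  have ind: "\<And>c. (\<Sum>j<m. smR (c j) (w j)) = 0 \<Longrightarrow> (\<forall>j<m. c j = 0)"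
   and spn: "\<And>x. \<exists>c. x = (\<Sum>j<m. smR (c j) (w j))" using B unfolding is_basis_def by auto
  show ?thesis unfolding is_basis_def
  proof (intro conjI allI impI)
    fix c j assume h: "(\<Sum>j<m. smR (c j) (smR (t j) (w j))) = 0" and j: "j < m"
    have "(\<Sum>j<m. smR (c j * t j) (w j)) = 0" using h by (simp add: mul)
    hence "c j * t j = 0" using ind[of "\<lambda>j. c j * t j"] j by blast
    hence "c j * t j * s j = 0" by simp
    thus "c j = 0" using st j by (simp add: mult.assoc)
  next
    fix x
    obtain c where x: "x = (\<Sum>j<m. smR (c j) (w j))" using spn by blast
    have "x = (\<Sum>j<m. smR (c j * s j) (smR (t j) (w j)))"
      unfolding x by (rule sum.cong) (use st in \<open>auto simp: mul[symmetric] mult.assoc\<close>)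
    thus "\<exists>c. x = (\<Sum>j<m. smR (c j) (smR (t j) (w j)))" by (rule exI[of _ "\<lambda>j. c j * s j"])
  qed
qed

lemma additive_sum:
  fixes f :: "'a::comm_monoid_add \<Rightarrow> 'b::ab_group_add"
  assumes "\<And>a b. f (a + b) = f a + f b"
  shows "f (sum g A) = (\<Sum>i\<in>A. f (g i))"
proof -
  have f0: "f 0 = 0" using assms[of 0 0] by (metis add_cancel_right_right add_0)
  show ?thesis
  proof (cases "finite A")
    case True then show ?thesis by (induction A rule: finite_induct) (auto simp: f0 assms)
  qed (simp add: f0)
qed

lemma diag_nonzero:
  fixes dag :: "'d::division_ring \<Rightarrow> 'd"
  assumes V: "left_module sm"
    and psi: "skew_hermitian dag sm \<psi>" "nondegenerate \<psi>"
    and basis: "is_basis sm m v" "weakly_unitary \<psi> m v"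
    and j: "j < m"
  shows "\<psi> (v j) (v j) \<noteq> 0" "dag (\<psi> (v j) (v j)) = - \<psi> (v j) (v j)"
proof -
  have one: "\<And>x. sm 1 x = x" using V unfolding left_module_def by auto
  have ind: "\<And>c. (\<Sum>j<m. sm (c j) (v j)) = 0 \<Longrightarrow> (\<forall>j<m. c j = 0)"
   and spn: "\<And>x. \<exists>c. x = (\<Sum>j<m. sm (c j) (v j))" using basis unfolding is_basis_def by auto
  have vj: "v j \<noteq> 0"
  proof
    assume v0: "v j = 0"
    let ?c = "\<lambda>i. if i = j then 1 else (0::'d)"
    have "(\<Sum>i<m. sm (?c i) (v i)) = 0"
      by (rule sum.neutral) (auto simp: v0 lm_zero[OF V])
    hence "?c j = 0" using ind[of ?c] j by blast
    thus False by simp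
  qed
  then obtain y where y: "\<psi> (v j) y \<noteq> 0" using psi(2) unfolding nondegenerate_def by blast
  obtain c where yc: "y = (\<Sum>i<m. sm (c i) (v i))" using spn by blast
  have padd: "\<And>x y y'. \<psi> x (y + y') = \<psi> x y + \<psi> x y'"
    and psm: "\<And>a b x y. \<psi> (sm a x) (sm b y) = a * \<psi> x y * dag b"
    and skew: "\<And>x y. \<psi> y x = - dag (\<psi> x y)"
    using psi(1) unfolding skew_hermitian_def by blast+
  have pr: "\<psi> x (sm b y) = \<psi> x y * dag b" for x b y
    using psm[of 1 x b y] by (simp add: one)
  have "\<psi> (v j) y = (\<Sum>i<m. \<psi> (v j) (sm (c i) (v i)))"
    unfolding yc by (rule additive_sum) (rule padd)
  also have "\<dots> = (\<Sum>i<m. if i = j then \<psi> (v j) (v j) * dag (c j) else 0)"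
    by (rule sum.cong) (use basis(2) j in \<open>auto simp: pr weakly_unitary_def\<close>)
  also have "\<dots> = \<psi> (v j) (v j) * dag (c j)" using j by simp
  finally show "\<psi> (v j) (v j) \<noteq> 0" using y by auto
  show "dag (\<psi> (v j) (v j)) = - \<psi> (v j) (v j)" using skew[of "v j" "v j"] by (metis minus_minus)
qed

lemma assemble:
  fixes dag :: "'d::{division_ring, ring_char_0} \<Rightarrow> 'd"
    and \<iota> :: "'d \<Rightarrow> 'r::real_algebra_1"
    and dagR :: "'r \<Rightarrow> 'r"
    and sm :: "'d \<Rightarrow> 'v::ab_group_add \<Rightarrow> 'v"
    and \<psi> :: "'v \<Rightarrow> 'v \<Rightarrow> 'd"
    and m :: nat and v :: "nat \<Rightarrow> 'v"
    and smR :: "'r \<Rightarrow> 'w::ab_group_add \<Rightarrow> 'w"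
    and jV :: "'v \<Rightarrow> 'w"
    and \<psi>R :: "'w \<Rightarrow> 'w \<Rightarrow> 'r"
    and P :: "'r \<Rightarrow> bool" and N :: "'r \<Rightarrow> 'r \<Rightarrow> bool"
  assumes DR: "real_scalar_extension \<iota>"
    and dagR: "real_ext_inv dag \<iota> dagR"
    and V: "left_module sm"
    and psi: "skew_hermitian dag sm \<psi>" "nondegenerate \<psi>"
    and basis: "is_basis sm m v" "weakly_unitary \<psi> m v"
    and VR: "real_module_extension \<iota> sm smR jV m v"
    and psiR: "real_form_extension \<iota> smR jV \<psi> \<psi>R"
    and H: "\<And>b b'. dagR b = - b \<Longrightarrow> b * b' = 1 \<Longrightarrow> b' * b = 1 \<Longrightarrow>
             \<exists>s t. s * t = 1 \<and> t * s = 1 \<and> P (t * b * dagR t) \<and> N s b"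
  shows "\<exists>s t :: nat \<Rightarrow> 'r. (\<forall>j<m. s j * t j = 1 \<and> t j * s j = 1) \<and>
         is_basis smR m (\<lambda>j. smR (t j) (jV (v j))) \<and>
         weakly_unitary \<psi>R m (\<lambda>j. smR (t j) (jV (v j))) \<and>
         (\<forall>j<m. P (\<psi>R (smR (t j) (jV (v j))) (smR (t j) (jV (v j))))) \<and>
         (\<forall>j<m. N (s j) (\<iota> (\<psi> (v j) (v j))))"
proof -
  have iadd: "\<And>x y. \<iota> (x + y) = \<iota> x + \<iota> y" and imul: "\<And>x y. \<iota> (x*y) = \<iota> x * \<iota> y"
    and i1: "\<iota> 1 = 1" using DR unfolding real_scalar_extension_def by blast+
  have i0: "\<iota> 0 = 0" using iadd[of 0 0] by simp
  have ineg: "\<iota> (- x) = - \<iota> x" for x using iadd[of x "-x"] i0 by (metis add.commute add_eq_0_iff)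
  have dg: "\<And>x. dagR (\<iota> x) = \<iota> (dag x)" using dagR unfolding real_ext_inv_def by auto
  have sesq: "\<And>s s' u w. \<psi>R (smR s (jV u)) (smR s' (jV w)) = s * \<iota> (\<psi> u w) * dagR s'"
    using psiR_sesq[OF DR dagR psi(1) VR psiR] .
  have "\<forall>j. \<exists>st. j < m \<longrightarrow> (fst st * snd st = 1 \<and> snd st * fst st = 1 \<and>
           P (snd st * \<iota> (\<psi> (v j) (v j)) * dagR (snd st)) \<and> N (fst st) (\<iota> (\<psi> (v j) (v j))))"
  proof (intro allI)
    fix j
    show "\<exists>st. j < m \<longrightarrow> (fst st * snd st = 1 \<and> snd st * fst st = 1 \<and>
           P (snd st * \<iota> (\<psi> (v j) (v j)) * dagR (snd st)) \<and> N (fst st) (\<iota> (\<psi> (v j) (v j))))"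
    proof (cases "j < m")
      case True
      let ?a = "\<psi> (v j) (v j)"
      have a0: "?a \<noteq> 0" and da: "dag ?a = - ?a" using diag_nonzero[OF V psi basis True] by auto
      have "dagR (\<iota> ?a) = - \<iota> ?a" by (simp add: dg da ineg)
      moreover have "\<iota> ?a * \<iota> (inverse ?a) = 1" "\<iota> (inverse ?a) * \<iota> ?a = 1"
        using a0 by (simp_all add: imul[symmetric] i1)
      ultimately obtain s t where "s * t = 1 \<and> t * s = 1 \<and> P (t * \<iota> ?a * dagR t) \<and> N s (\<iota> ?a)"
        using H by blast
      then show ?thesis by (intro exI[of _ "(s,t)"]) auto
    qed simp
  qed
  then obtain f where f: "\<And>j. j < m \<Longrightarrow> (fst (f j) * snd (f j) = 1 \<and> snd (f j) * fst (f j) = 1 \<and>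
           P (snd (f j) * \<iota> (\<psi> (v j) (v j)) * dagR (snd (f j))) \<and> N (fst (f j)) (\<iota> (\<psi> (v j) (v j))))"
    by metis
  define s where "s = (\<lambda>j. fst (f j))"
  define t where "t = (\<lambda>j. snd (f j))"
  have st: "\<forall>j<m. s j * t j = 1 \<and> t j * s j = 1" using f by (simp add: s_def t_def)
  have lmR: "left_module smR" and bR: "is_basis smR m (\<lambda>i. jV (v i))"
    using VR unfolding real_module_extension_def by auto
  have "is_basis smR m (\<lambda>j. smR (t j) (jV (v j)))"
    using basis_transform[OF lmR bR st] .
  moreover have "weakly_unitary \<psi>R m (\<lambda>j. smR (t j) (jV (v j)))"
    using basis(2) by (simp add: weakly_unitary_def sesq i0)
  moreover have "\<forall>j<m. P (\<psi>R (smR (t j) (jV (v j))) (smR (t j) (jV (v j))))"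
    using f by (simp add: sesq t_def)
  moreover have "\<forall>j<m. N (s j) (\<iota> (\<psi> (v j) (v j)))" using f by (simp add: s_def)
  ultimately show ?thesis using st by blast
qed

lemma norm_ineq:
  fixes T Q :: "'e::finite \<Rightarrow> real" and k :: real
  assumes k: "k > 0" and T: "\<And>l. T l \<ge> 0" and TQ: "\<And>l. (T l)\<^sup>2 \<le> k * Q l"
  shows "sqrt (\<Sum>l\<in>UNIV. 2 * T l) \<le> (2 * k * real CARD('e)) powr (1/4) * sqrt (sqrt (\<Sum>l\<in>UNIV. 2 * Q l))"
proof -
  let ?e = "real CARD('e)"
  let ?ST = "\<Sum>l\<in>UNIV. T l" and ?SQ = "\<Sum>l\<in>UNIV. Q l"
  have Q: "Q l \<ge> 0" for l using TQ[of l] k by (metis zero_le_power2 order_trans zero_le_mult_iff not_less)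
  have STn: "?ST \<ge> 0" using T by (simp add: sum_nonneg)
  have SQn: "?SQ \<ge> 0" using Q by (simp add: sum_nonneg)
  have "?ST\<^sup>2 \<le> (\<Sum>l\<in>UNIV. (T l)\<^sup>2) * ?e" by (rule sum_squared_le_sum_of_squares)
  also have "\<dots> \<le> (\<Sum>l\<in>UNIV. k * Q l) * ?e" by (intro mult_right_mono sum_mono TQ) simp
  finally have cs: "?ST\<^sup>2 \<le> k * ?e * ?SQ" by (simp add: sum_distrib_left[symmetric] algebra_simps)
  define c where "c = (2 * k * ?e) powr (1/4)"
  have c0: "c \<ge> 0" by (simp add: c_def)
  have cc: "c\<^sup>2 = sqrt (2 * k * ?e)"
    unfolding c_def power2_eq_square using k
    by (simp add: powr_add[symmetric] powr_half_sqrt[symmetric])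
  have "2 * ?ST = sqrt ((2 * ?ST)\<^sup>2)" by (subst real_sqrt_abs) (use STn in simp)
  also have "\<dots> \<le> sqrt (4 * k * ?e * ?SQ)" using cs by (intro real_sqrt_le_mono) (simp add: power_mult_distrib)
  also have "\<dots> = c\<^sup>2 * sqrt (2 * ?SQ)" unfolding cc
    by (simp add: real_sqrt_mult[symmetric])
  finally have main: "2 * ?ST \<le> c\<^sup>2 * sqrt (2 * ?SQ)" .
  have "sqrt (\<Sum>l\<in>UNIV. 2 * T l) = sqrt (2 * ?ST)" by (simp add: sum_distrib_left)
  also have "\<dots> \<le> sqrt (c\<^sup>2 * sqrt (2 * ?SQ))" using main by (rule real_sqrt_le_mono)
  also have "\<dots> = c * sqrt (sqrt (2 * ?SQ))" using c0 by (simp add: real_sqrt_mult)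
  finally show ?thesis by (simp add: c_def sum_distrib_left)
qed



lemma quat_local:
  assumes re: "qre q = 0" and nz: "q \<noteq> qzero"
  shows "\<exists>\<sigma> \<tau>. qmul \<sigma> \<tau> = qone \<and> qmul \<tau> \<sigma> = qone \<and> qmul (qmul \<tau> q) (qconj \<tau>) = q_i \<and>
    qre (qmul \<sigma> (qconj \<sigma>)) \<ge> 0 \<and> (qre (qmul \<sigma> (qconj \<sigma>)))\<^sup>2 \<le> 1 * qre (qmul q (qconj q))"
proof -
  obtain x y z where q: "q = Quat 0 x y z" using re by (cases q) auto
  define r where "r = sqrt (x\<^sup>2 + y\<^sup>2 + z\<^sup>2)"
  have "(x, y, z) \<noteq> (0,0,0)" using nz q by (auto simp: qzero_def)
  hence pos: "x\<^sup>2 + y\<^sup>2 + z\<^sup>2 > 0"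
    by (metis (no_types) add_nonneg_nonneg add_nonneg_pos add_pos_nonneg zero_le_power2 zero_less_power2)

  have r0: "r > 0" using pos by (simp add: r_def)
  have rr: "r\<^sup>2 = x\<^sup>2 + y\<^sup>2 + z\<^sup>2" unfolding r_def using pos by simp
  have qq: "qre (qmul q (qconj q)) = r\<^sup>2" using rr by (simp add: q qmul_def qconj_def power2_eq_square)
  have xr: "r + x \<ge> 0"
  proof -
    have "\<bar>x\<bar> \<le> r" unfolding r_def by (rule real_le_rsqrt) (simp add: power2_abs)
    thus ?thesis by linarith
  qed
  show ?thesis
  proof (cases "r + x = 0")
    case False
    hence rx: "r + x > 0" using xr by simp
    define \<mu> where "\<mu> = 1 / sqrt (2 * (r + x))"
    define \<rho> where "\<rho> = 1 / r"
    have h1: "\<mu>\<^sup>2 * (2 * (r + x)) = 1" unfolding \<mu>_def using rx by (simp add: power_divide)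
    have h2: "\<rho> * r = 1" unfolding \<rho>_def using r0 by simp
    define \<sigma> where "\<sigma> = Quat (\<mu>*(r+x)) 0 (-\<mu>*z) (\<mu>*y)"
    define \<tau> where "\<tau> = Quat (\<mu>*(r+x)*\<rho>) 0 (\<mu>*z*\<rho>) (-\<mu>*y*\<rho>)"
    have n\<sigma>: "qre (qmul \<sigma> (qconj \<sigma>)) = r"
    proof -
      have "qre (qmul \<sigma> (qconj \<sigma>)) = \<mu>\<^sup>2 * ((r+x)\<^sup>2 + z\<^sup>2 + y\<^sup>2)"
        by (simp add: \<sigma>_def qmul_def qconj_def power2_eq_square algebra_simps)
      also have "\<dots> = r" using h1 rr by algebra
      finally show ?thesis .
    qed
    have "qmul \<sigma> \<tau> = qone" unfolding \<sigma>_def \<tau>_def qmul_def qone_def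
      using h1 h2 rr by simp algebra
    moreover have "qmul \<tau> \<sigma> = qone" unfolding \<sigma>_def \<tau>_def qmul_def qone_def
      using h1 h2 rr by simp algebra
    moreover have "qmul (qmul \<tau> q) (qconj \<tau>) = q_i" unfolding \<tau>_def q qmul_def q_i_def qconj_def
      using h1 h2 rr by simp algebra
    ultimately show ?thesis using n\<sigma> qq r0 by (intro exI[of _ \<sigma>] exI[of _ \<tau>]) simp
  next
    case True
    hence x: "x = - r" by simp
    hence yz: "y = 0" "z = 0" using rr by (auto simp: power2_eq_square)
    define \<nu> where "\<nu> = sqrt r"
    have hn: "\<nu> * \<nu> = r" unfolding \<nu>_def using r0 by simp
    have n0: "\<nu> \<noteq> 0" unfolding \<nu>_def using r0 by simp
    define \<sigma> where "\<sigma> = Quat 0 0 \<nu> 0"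
    define \<tau> where "\<tau> = Quat 0 0 (- 1/\<nu>) 0"
    have n\<sigma>: "qre (qmul \<sigma> (qconj \<sigma>)) = r" by (simp add: \<sigma>_def qmul_def qconj_def hn)
    have "qmul \<sigma> \<tau> = qone" "qmul \<tau> \<sigma> = qone" "qmul (qmul \<tau> q) (qconj \<tau>) = q_i"
      unfolding \<sigma>_def \<tau>_def q qmul_def q_i_def qconj_def qone_def x yz using n0 hn r0
      by (simp_all add: field_simps)
    then show ?thesis using n\<sigma> qq r0 by (intro exI[of _ \<sigma>] exI[of _ \<tau>]) simp
  qed
qed

lemma typeIII_local:
  fixes \<alpha> :: "'r::real_algebra_1 \<Rightarrow> ('e::finite \<Rightarrow> quat)"
  assumes iso: "iso_III dagR \<alpha>" and db: "dagR b = - b" and bb: "b * b' = 1" "b' * b = 1"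
  shows "\<exists>s t. s * t = 1 \<and> t * s = 1 \<and> \<alpha> (t * b * dagR t) = (\<lambda>l. q_i) \<and>
     norm_III dagR \<alpha> s \<le> (2 * 1 * real CARD('e)) powr (1/4) * sqrt (norm_III dagR \<alpha> b)"
proof -
  have bij: "bij \<alpha>" and asc: "\<And>c x. \<alpha> (scaleR c x) = (\<lambda>l. qscale c (\<alpha> x l))"
    and amul: "\<And>x y. \<alpha> (x * y) = (\<lambda>l. qmul (\<alpha> x l) (\<alpha> y l))"
    and a1: "\<alpha> 1 = (\<lambda>l. qone)" and adag: "\<And>x. \<alpha> (dagR x) = (\<lambda>l. qconj (\<alpha> x l))"
    using iso unfolding iso_III_def by blast+
  have ql: "qre (\<alpha> b l) = 0 \<and> \<alpha> b l \<noteq> qzero" for l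
  proof
    have "\<alpha> (dagR b) = \<alpha> ((-1) *\<^sub>R b)" using db by simp
    hence "qconj (\<alpha> b l) = qscale (-1) (\<alpha> b l)" using asc adag by metis
    thus "qre (\<alpha> b l) = 0" by (cases "\<alpha> b l") (simp add: qconj_def qscale_def)
    have "qmul (\<alpha> b l) (\<alpha> b' l) = qone" using arg_cong[OF bb(1), of \<alpha>] amul a1 by metis
    thus "\<alpha> b l \<noteq> qzero" by (auto simp: qmul_def qone_def qzero_def)
  qed
  have "\<forall>l. \<exists>p. qmul (fst p) (snd p) = qone \<and> qmul (snd p) (fst p) = qone \<and>
     qmul (qmul (snd p) (\<alpha> b l)) (qconj (snd p)) = q_i \<and>
    qre (qmul (fst p) (qconj (fst p))) \<ge> 0 \<and> (qre (qmul (fst p) (qconj (fst p))))\<^sup>2 \<le> 1 * qre (qmul (\<alpha> b l) (qconj (\<alpha> b l)))"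
    using quat_local ql by fastforce
  then obtain f where f: "\<And>l. qmul (fst (f l)) (snd (f l)) = qone \<and> qmul (snd (f l)) (fst (f l)) = qone \<and>
     qmul (qmul (snd (f l)) (\<alpha> b l)) (qconj (snd (f l))) = q_i \<and>
    qre (qmul (fst (f l)) (qconj (fst (f l)))) \<ge> 0 \<and> (qre (qmul (fst (f l)) (qconj (fst (f l)))))\<^sup>2 \<le> 1 * qre (qmul (\<alpha> b l) (qconj (\<alpha> b l)))"
    by metis
  define s where "s = inv \<alpha> (\<lambda>l. fst (f l))"
  define t where "t = inv \<alpha> (\<lambda>l. snd (f l))"
  have as: "\<alpha> s = (\<lambda>l. fst (f l))" unfolding s_def using bij by (simp add: bij_is_surj surj_f_inv_f)
  have at: "\<alpha> t = (\<lambda>l. snd (f l))" unfolding t_def using bij by (simp add: bij_is_surj surj_f_inv_f)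
  have inj: "inj \<alpha>" using bij bij_is_inj by blast
  have "\<alpha> (s * t) = \<alpha> 1" by (simp add: amul a1 as at f)
  hence st: "s * t = 1" using inj by (simp add: inj_eq)
  have "\<alpha> (t * s) = \<alpha> 1" by (simp add: amul a1 as at f)
  hence ts: "t * s = 1" using inj by (simp add: inj_eq)
  have "\<alpha> (t * b * dagR t) = (\<lambda>l. q_i)" by (simp add: amul adag at f)
  moreover have "norm_III dagR \<alpha> s \<le> (2 * 1 * real CARD('e)) powr (1/4) * sqrt (norm_III dagR \<alpha> b)"
    unfolding norm_III_def Trd_III_def
    by (simp add: amul adag as) (rule norm_ineq[where k=1, simplified], use f in auto)
  ultimately show ?thesis using st ts by blast
qed



definition hip :: "complex^'n \<Rightarrow> complex^'n \<Rightarrow> complex" where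
  "hip x y = (\<Sum>i\<in>UNIV. cnj (x$i) * y$i)"

lemma hip_add_right[simp]: "hip x (y + z) = hip x y + hip x z"
  by (simp add: hip_def algebra_simps sum.distrib)
lemma hip_add_left[simp]: "hip (x + y) z = hip x z + hip y z"
  by (simp add: hip_def algebra_simps sum.distrib)
lemma hip_diff_right[simp]: "hip x (y - z) = hip x y - hip x z"
  by (simp add: hip_def algebra_simps sum_subtractf)
lemma hip_diff_left[simp]: "hip (x - y) z = hip x z - hip y z"
  by (simp add: hip_def algebra_simps sum_subtractf)
lemma hip_scale_right[simp]: "hip x (c *s y) = c * hip x y"
  by (simp add: hip_def algebra_simps sum_distrib_left)
lemma hip_scale_left[simp]: "hip (c *s x) y = cnj c * hip x y"
  by (simp add: hip_def algebra_simps sum_distrib_left)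
lemma hip_zero_left[simp]: "hip 0 y = 0" by (simp add: hip_def)
lemma hip_zero_right[simp]: "hip x 0 = 0" by (simp add: hip_def)
lemma hip_sym: "hip y x = cnj (hip x y)"
  by (simp add: hip_def mult.commute)
lemma hip_sum_right: "hip x (sum f A) = (\<Sum>a\<in>A. hip x (f a))"
  by (rule additive_sum) simp

lemma hip_self: "hip x x = of_real ((norm x)\<^sup>2)"
proof -
  have "(norm x)\<^sup>2 = (\<Sum>i\<in>UNIV. (norm (x$i))\<^sup>2)"
    unfolding norm_vec_def L2_set_def by (simp add: sum_nonneg)
  hence "of_real ((norm x)\<^sup>2) = (\<Sum>i\<in>UNIV. complex_of_real ((norm (x$i))\<^sup>2))" by simp
  also have "\<dots> = hip x x" unfolding hip_def
  proof (rule sum.cong)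
    fix i
    show "complex_of_real ((norm (x$i))\<^sup>2) = cnj (x$i) * x$i"
      by (simp only: complex_norm_square mult.commute)
  qed simp
  finally show ?thesis by simp
qed

lemma hip_self_eq0: "hip x x = 0 \<longleftrightarrow> x = 0"
  by (simp add: hip_self)

lemma cadj_cadj[simp]: "cadj (cadj A) = A" by (simp add: cadj_def vec_eq_iff)

lemma hip_mat: "hip (H *v x) y = hip x (cadj H *v y)"
proof -
  have "hip (H *v x) y = (\<Sum>i\<in>UNIV. \<Sum>j\<in>UNIV. cnj (H$i$j) * cnj (x$j) * y$i)"
    by (simp add: hip_def matrix_vector_mult_def sum_distrib_right)
  also have "\<dots> = (\<Sum>j\<in>UNIV. \<Sum>i\<in>UNIV. cnj (H$i$j) * cnj (x$j) * y$i)" by (rule sum.swap)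
  also have "\<dots> = hip x (cadj H *v y)"
    by (simp add: hip_def matrix_vector_mult_def cadj_def sum_distrib_left algebra_simps)
  finally show ?thesis .
qed

lemma mv_scale: fixes H :: "complex^'n^'m" shows "H *v (c *s x) = c *s (H *v x)"
  unfolding vec_eq_iff matrix_vector_mult_def
  by (auto simp: sum_distrib_left intro!: sum.cong)
lemma mv_add: fixes H :: "complex^'n^'m" shows "H *v (x + y) = H *v x + H *v y"
  by (simp add: vec_eq_iff matrix_vector_mult_def sum.distrib algebra_simps)
lemma mv_diff: fixes H :: "complex^'n^'m" shows "H *v (x - y) = H *v x - H *v y"
  unfolding vec_eq_iff matrix_vector_mult_def
  by (auto simp: sum_subtractf[symmetric] right_diff_distrib)

lemma quad_zero:
  fixes a b :: real
  assumes a: "a \<ge> 0" and h: "\<And>t. a * t + b * t\<^sup>2 \<le> 0"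
  shows "a = 0"
proof (rule ccontr)
  assume "a \<noteq> 0" hence a0: "a > 0" using a by simp
  define t where "t = a / (2 * (\<bar>b\<bar> + 1))"
  have t0: "t > 0" using a0 by (simp add: t_def)
  have "\<bar>b\<bar> * t \<le> a / 2" unfolding t_def using a0
    by (simp add: field_simps)
  hence "a * t + b * t\<^sup>2 \<ge> a * t - (a/2) * t" using t0
    by (smt (verit) power2_eq_square mult_right_mono abs_ge_self abs_mult mult.assoc mult_minus_left abs_le_iff)
  moreover have "a * t - (a/2) * t > 0" using a0 t0 by simp
  ultimately show False using h[of t] by linarith
qed

lemma ofreal_smult: "(of_real r :: complex) *s x = r *\<^sub>R x"
  by (simp add: vec_eq_iff scaleR_conv_of_real[where 'a=complex])
lemma hip_scaleR_right[simp]: "hip x (r *\<^sub>R y) = of_real r * hip x y"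
  by (simp add: ofreal_smult[symmetric])
lemma hip_scaleR_left[simp]: "hip (r *\<^sub>R x) y = of_real r * hip x y"
  by (simp add: ofreal_smult[symmetric])
lemma mv_scaleR: fixes H :: "complex^'n^'m" shows "H *v (r *\<^sub>R x) = r *\<^sub>R (H *v x)"
  by (simp add: ofreal_smult[symmetric] mv_scale)

lemma smult_add_left: "((a::complex) + b) *s x = a *s x + b *s x"
  by (simp add: vec_eq_iff algebra_simps)

lemma eig_exists:
  fixes H :: "complex^'n^'n" and S :: "(complex^'n) set"
  assumes herm: "cadj H = H" and cl: "closed S"
    and add: "\<And>x y. x\<in>S \<Longrightarrow> y\<in>S \<Longrightarrow> x + y \<in> S" and sc: "\<And>c x. x\<in>S \<Longrightarrow> c *s x \<in> S"
    and inv: "\<And>x. x\<in>S \<Longrightarrow> H *v x \<in> S" and ne: "x1 \<in> S" "x1 \<noteq> 0"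
  shows "\<exists>x\<in>S. hip x x = 1 \<and> (\<exists>\<mu>::real. H *v x = of_real \<mu> *s x)"
proof -
  define f where "f x = Re (hip x (H *v x))" for x
  define K where "K = S \<inter> sphere 0 1"
  have cK: "compact K" unfolding K_def by (intro closed_Int_compact cl compact_sphere)
  have scR: "\<And>r x. x \<in> S \<Longrightarrow> r *\<^sub>R x \<in> S" by (simp add: ofreal_smult[symmetric] sc)
  have "(1 / norm x1) *\<^sub>R x1 \<in> K" using ne scR[OF ne(1)] by (simp add: K_def)
  hence Kne: "K \<noteq> {}" by blast
  have c1: "continuous_on UNIV (\<lambda>x::complex^'n. x $ i)" for i
    by (intro continuous_on_component continuous_on_id)
  have c2: "continuous_on UNIV (\<lambda>x. (H *v x) $ i)" for i
    unfolding matrix_vector_mult_def vec_lambda_beta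
    by (intro continuous_on_sum continuous_on_mult continuous_on_const c1)
  have "continuous_on UNIV f" unfolding f_def hip_def
    by (intro continuous_on_Re continuous_on_sum continuous_on_mult continuous_on_cnj c1 c2)
  hence contf: "continuous_on K f" by (rule continuous_on_subset) simp
  obtain x0 where x0K: "x0 \<in> K" and mx: "\<And>y. y \<in> K \<Longrightarrow> f y \<le> f x0"
    using continuous_attains_sup[OF cK Kne contf] by blast
  define \<mu> where "\<mu> = f x0"
  have x0S: "x0 \<in> S" and nx0: "norm x0 = 1" using x0K by (auto simp: K_def)
  have hx0: "hip x0 x0 = 1" using nx0 by (simp add: hip_self)
  have fscale: "f (r *\<^sub>R z) = r\<^sup>2 * f z" for r z
    by (simp add: f_def mv_scaleR power2_eq_square)
  have f0: "f 0 = 0" by (simp add: f_def)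
  have A: "f z \<le> \<mu> * (norm z)\<^sup>2" if zS: "z \<in> S" for z
  proof (cases "z = 0")
    case True then show ?thesis by (simp add: f0)
  next
    case False
    define w where "w = (1 / norm z) *\<^sub>R z"
    have "w \<in> K" using False scR[OF zS] by (simp add: w_def K_def)
    hence "f w \<le> \<mu>" using mx by (simp add: \<mu>_def)
    moreover have "f w = f z / (norm z)\<^sup>2" unfolding w_def fscale by (simp add: power_divide)
    ultimately show ?thesis using False by (simp add: divide_le_eq mult.commute)
  qed
  define lam0 where "lam0 = hip x0 (H *v x0)"
  have "cnj lam0 = hip (H *v x0) x0" unfolding lam0_def by (rule hip_sym[symmetric])
  also have "\<dots> = lam0" unfolding lam0_def hip_mat herm ..
  finally have "cnj lam0 = lam0" .
  hence "Im (cnj lam0) = Im lam0" by (simp only:)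
  hence "Im lam0 = 0" by simp
  moreover have "\<mu> = Re lam0" by (simp add: \<mu>_def f_def lam0_def)
  ultimately have lam: "lam0 = of_real \<mu>" by (simp add: complex_eq_iff)
  define y where "y = H *v x0 + (- lam0) *s x0"
  have yS: "y \<in> S" unfolding y_def by (intro add inv sc x0S)
  have hxy: "hip x0 y = 0" by (simp add: y_def hx0 lam0_def)
  have hyx: "hip y x0 = 0" by (subst hip_sym) (simp add: hxy)
  have Hx0: "H *v x0 = y + lam0 *s x0" by (simp add: y_def vec_eq_iff)
  have hHy: "hip x0 (H *v y) = hip y y"
  proof -
    have "hip x0 (H *v y) = hip (H *v x0) y" using hip_mat[of H x0 y] herm by simp
    also have "\<dots> = hip y y" by (simp add: Hx0 hxy)
    finally show ?thesis .
  qed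
  have hyH: "hip y (H *v x0) = hip y y" by (simp add: Hx0 hyx)
  define Y where "Y = (norm y)\<^sup>2"
  have Yhip: "hip y y = of_real Y" by (simp add: Y_def hip_self)
  have quad: "(2 * Y) * t + (f y - \<mu> * Y) * t\<^sup>2 \<le> 0" for t
  proof -
    define z where "z = x0 + t *\<^sub>R y"
    have zS: "z \<in> S" unfolding z_def by (intro add scR x0S yS)
    have "hip z z = 1 + of_real (t\<^sup>2 * Y)"
      by (simp add: z_def hx0 hxy hyx Yhip power2_eq_square)
    hence "complex_of_real ((norm z)\<^sup>2) = complex_of_real (1 + t\<^sup>2 * Y)"
      by (simp only: hip_self[symmetric] of_real_add of_real_1)
    hence nz: "(norm z)\<^sup>2 = 1 + t\<^sup>2 * Y" by (simp only: of_real_eq_iff)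
    have "hip z (H *v z) = lam0 + of_real (2 * t * Y) + of_real (t\<^sup>2) * hip y (H *v y)"
      by (simp add: z_def mv_add mv_scaleR hHy hyH Yhip lam0_def[symmetric] algebra_simps power2_eq_square)
    hence fz: "f z = \<mu> + 2 * t * Y + t\<^sup>2 * f y" unfolding f_def by (simp add: lam f_def[symmetric])
    have "f z \<le> \<mu> * (norm z)\<^sup>2" by (rule A[OF zS])
    thus ?thesis unfolding fz nz by (simp add: algebra_simps)
  qed
  have "2 * Y = 0" by (rule quad_zero[OF _ quad]) (simp add: Y_def)
  hence "y = 0" by (simp add: Y_def)
  hence "H *v x0 = of_real \<mu> *s x0" using Hx0 lam by simp
  thus ?thesis using x0S hx0 by blast
qed

lemma cont_hip: "continuous_on UNIV (\<lambda>x::complex^'n. hip e x)"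
proof -
  have c1: "continuous_on UNIV (\<lambda>x::complex^'n. x $ i)" for i
    by (intro continuous_on_component continuous_on_id)
  show ?thesis unfolding hip_def
    by (intro continuous_on_sum continuous_on_mult continuous_on_const c1)
qed

lemma hip_sum_delta:
  assumes "finite E" "e' \<in> E" "\<forall>e\<in>E. hip e e = 1" "\<forall>e\<in>E. \<forall>e''\<in>E. e \<noteq> e'' \<longrightarrow> hip e e'' = 0"
  shows "(\<Sum>e\<in>E. c e * hip e' e) = c e'"
proof -
  have "(\<Sum>e\<in>E. c e * hip e' e) = (\<Sum>e\<in>E. if e = e' then c e else 0)"
    by (rule sum.cong) (use assms in auto)
  also have "\<dots> = c e'" using assms by simp
  finally show ?thesis .
qed

lemma spectral_set:
  fixes H :: "complex^'n^'n"
  assumes herm: "cadj H = H"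
  shows "k \<le> CARD('n) \<Longrightarrow> \<exists>E. finite E \<and> card E = k \<and> (\<forall>e\<in>E. hip e e = 1) \<and>
     (\<forall>e\<in>E. \<forall>e'\<in>E. e \<noteq> e' \<longrightarrow> hip e e' = 0) \<and> (\<forall>e\<in>E. \<exists>\<mu>::real. H *v e = of_real \<mu> *s e)"
proof (induction k)
  case 0
  show ?case by (rule exI[of _ "{}"]) simp
next
  case (Suc k)
  then obtain E where E: "finite E" "card E = k" "\<forall>e\<in>E. hip e e = 1"
     "\<forall>e\<in>E. \<forall>e'\<in>E. e \<noteq> e' \<longrightarrow> hip e e' = 0" "\<forall>e\<in>E. \<exists>\<mu>::real. H *v e = of_real \<mu> *s e"
    by auto
  define S where "S = {x. \<forall>e\<in>E. hip e x = 0}"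
  have clS: "closed S"
  proof -
    have "S = (\<Inter>e\<in>E. {x. hip e x = 0})" by (auto simp: S_def)
    moreover have "closed {x. hip e x = 0}" for e
      by (rule closed_Collect_eq) (simp_all add: cont_hip)
    ultimately show ?thesis by auto
  qed
  have addS: "x + y \<in> S" if "x \<in> S" "y \<in> S" for x y using that by (simp add: S_def)
  have scS: "c *s x \<in> S" if "x \<in> S" for c x using that by (simp add: S_def)
  have invS: "H *v x \<in> S" if xS: "x \<in> S" for x
    unfolding S_def
  proof (intro CollectI ballI)
    fix e assume eE: "e \<in> E"
    then obtain \<mu> :: real where mu: "H *v e = of_real \<mu> *s e" using E(5) by blast
    have "hip e (H *v x) = hip (H *v e) x" using hip_mat[of H e x] herm by simp
    also have "\<dots> = 0" using xS eE by (simp add: mu S_def)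
    finally show "hip e (H *v x) = 0" .
  qed
  have "\<exists>x1\<in>S. x1 \<noteq> 0"
  proof (rule ccontr)
    assume "\<not> (\<exists>x1\<in>S. x1 \<noteq> 0)"
    hence S0: "\<And>x. x \<in> S \<Longrightarrow> x = 0" by blast
    have "x \<in> vec.span E" for x
    proof -
      define p where "p = (\<Sum>e\<in>E. hip e x *s e)"
      have "x - p \<in> S" unfolding S_def
      proof (intro CollectI ballI)
        fix e' assume "e' \<in> E"
        have "hip e' p = (\<Sum>e\<in>E. hip e x * hip e' e)" unfolding p_def hip_sum_right by simp
        also have "\<dots> = hip e' x" by (rule hip_sum_delta) (use E \<open>e' \<in> E\<close> in auto)
        finally show "hip e' (x - p) = 0" by simp
      qed
      hence "x = p" using S0 by fastforce
      moreover have "p \<in> vec.span E" unfolding p_def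
        by (intro vec.span_sum vec.span_scale vec.span_base)
      ultimately show ?thesis by simp
    qed
    hence "(UNIV :: (complex^'n) set) \<subseteq> vec.span E" by blast
    hence "vec.dim (UNIV :: (complex^'n) set) \<le> card E" using vec.dim_le_card E(1) by blast
    thus False using Suc.prems E(2) vec_dim_card[where 'a=complex and 'n='n] by simp
  qed
  then obtain x1 where x1: "x1 \<in> S" "x1 \<noteq> 0" by blast
  obtain x0 where x0S: "x0 \<in> S" and hx0: "hip x0 x0 = 1" and ev: "\<exists>\<mu>::real. H *v x0 = of_real \<mu> *s x0"
    using eig_exists[OF herm clS addS scS invS x1] by blast
  have x0E: "x0 \<notin> E" using x0S hx0 by (auto simp: S_def)
  have o1: "\<forall>e\<in>E. hip e x0 = 0" using x0S by (simp add: S_def)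
  have o2: "\<forall>e\<in>E. hip x0 e = 0" using o1 hip_sym by (metis complex_cnj_zero)
  show ?case
    by (rule exI[of _ "insert x0 E"]) (use E x0E hx0 o1 o2 ev in auto)
qed

lemma spectral:
  fixes H :: "complex^'n^'n"
  assumes herm: "cadj H = H"
  shows "\<exists>U (\<mu>::'n \<Rightarrow> real). cadj U ** U = mat 1 \<and> U ** cadj U = mat 1 \<and>
           (\<forall>j. H *v column j U = of_real (\<mu> j) *s column j U)"
proof -
  obtain E where E: "finite E" "card E = CARD('n)" "\<forall>e\<in>E. hip e e = 1"
     "\<forall>e\<in>E. \<forall>e'\<in>E. e \<noteq> e' \<longrightarrow> hip e e' = 0" "\<forall>e\<in>E. \<exists>\<mu>::real. H *v e = of_real \<mu> *s e"
    using spectral_set[OF herm, of "CARD('n)"] by auto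
  obtain g where g: "bij_betw g (UNIV::'n set) E"
    using finite_same_card_bij[of "UNIV::'n set" E] E by auto
  have gE: "g j \<in> E" for j using g by (auto simp: bij_betw_def)
  have ginj: "g a = g b \<longleftrightarrow> a = b" for a b using g by (auto simp: bij_betw_def inj_on_def)
  define U where "U = (\<chi> i j. g j $ i)"
  have col: "column j U = g j" for j by (simp add: U_def column_def vec_eq_iff)
  have "cadj U ** U = mat 1"
  proof -
    have "(cadj U ** U) $ a $ b = hip (g a) (g b)" for a b
      by (simp add: U_def cadj_def matrix_matrix_mult_def hip_def)
    also have "hip (g a) (g b) = (if a = b then 1 else 0)" for a b
      using E(3,4) gE ginj by auto
    finally show ?thesis by (simp add: vec_eq_iff mat_def)
  qed
  moreover hence "U ** cadj U = mat 1" using matrix_left_right_inverse by blast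
  moreover have "\<forall>j. \<exists>\<mu>::real. H *v column j U = of_real \<mu> *s column j U"
    using E(5) gE col by metis
  then obtain \<mu> where "\<forall>j. H *v column j U = of_real (\<mu> j) *s column j U" by metis
  ultimately show ?thesis by blast
qed



definition mdiag :: "('n::finite \<Rightarrow> complex) \<Rightarrow> complex^'n^'n" where
  "mdiag f = (\<chi> i j. if i = j then f i else 0)"

lemma mul_mdiag_right: "(X :: complex^'n^'m) ** mdiag f = (\<chi> i j. X$i$j * f j)"
  by (simp add: vec_eq_iff matrix_matrix_mult_def mdiag_def if_distrib cong: if_cong)
lemma mul_mdiag_left: "mdiag f ** (X :: complex^'m^'n) = (\<chi> i j. f i * X$i$j)"
proof -
  have "(\<Sum>k\<in>UNIV. (if i = k then f i else 0) * X$k$j) = f i * X$i$j" for i j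
  proof -
    have "(\<Sum>k\<in>UNIV. (if i = k then f i else 0) * X$k$j) = (\<Sum>k\<in>UNIV. if k = i then f i * X$i$j else 0)"
      by (rule sum.cong) auto
    thus ?thesis by simp
  qed
  thus ?thesis by (simp add: vec_eq_iff matrix_matrix_mult_def mdiag_def)
qed
lemma mdiag_mul: "mdiag f ** mdiag g = mdiag (\<lambda>i. f i * g i)"
  by (simp add: mul_mdiag_left) (simp add: mdiag_def vec_eq_iff)
lemma cadj_mdiag: "cadj (mdiag f) = mdiag (\<lambda>i. cnj (f i))"
  by (simp add: cadj_def mdiag_def vec_eq_iff)
lemma trace_mdiag: "trace (mdiag f) = sum f UNIV"
  by (simp add: trace_def mdiag_def)
lemma mdiag_one: "mdiag (\<lambda>_. 1) = mat 1"
  by (simp add: mdiag_def mat_def vec_eq_iff)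
lemma cadj_mul: "cadj ((X::complex^'n^'n) ** (Y::complex^'n^'n)) = cadj Y ** cadj X"
  by (simp add: cadj_def matrix_matrix_mult_def vec_eq_iff mult.commute)

lemma eig_matrix:
  fixes A U :: "complex^'n^'n"
  assumes "\<forall>j. A *v column j U = lm j *s column j U"
  shows "A ** U = U ** mdiag lm"
proof -
  have "(A ** U) $ i $ j = (A *v column j U) $ i" for i j
    by (simp add: matrix_matrix_mult_def matrix_vector_mult_def column_def)
  then show ?thesis using assms by (simp add: vec_eq_iff mul_mdiag_right column_def mult.commute)
qed

lemma block_local:
  fixes A B :: "complex^'n^'n"
  assumes skew: "cadj A = - A" and BA: "B ** A = mat 1"
  shows "\<exists>S T. S ** T = mat 1 \<and> T ** S = mat 1 \<and>
     (\<forall>a b. a \<noteq> b \<longrightarrow> (T ** A ** cadj T) $ a $ b = 0) \<and>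
     (\<forall>a. (T ** A ** cadj T) $ a $ a \<in> {\<i>, - \<i>}) \<and>
     Re (trace (S ** cadj S)) \<ge> 0 \<and>
     (Re (trace (S ** cadj S)))\<^sup>2 \<le> real CARD('n) * Re (trace (A ** cadj A))"
proof -
  define H where "H = (\<chi> i j. \<i> * A$i$j)"
  have "cadj H = H" using skew
    by (simp add: H_def cadj_def vec_eq_iff)
  then obtain U and \<mu> :: "'n \<Rightarrow> real" where UU: "cadj U ** U = mat 1" and UU': "U ** cadj U = mat 1"
    and ev: "\<forall>j. H *v column j U = of_real (\<mu> j) *s column j U"
    using spectral by blast
  define lm where "lm j = - \<i> * of_real (\<mu> j)" for j
  have HA: "H *v x = \<i> *s (A *v x)" for x
    by (simp add: H_def vec_eq_iff matrix_vector_mult_def sum_distrib_left mult.assoc)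
  have evA: "\<forall>j. A *v column j U = lm j *s column j U"
  proof
    fix j
    have "\<i> *s (A *v column j U) = of_real (\<mu> j) *s column j U" using ev HA by metis
    hence "(- \<i>) *s (\<i> *s (A *v column j U)) = (- \<i>) *s (of_real (\<mu> j) *s column j U)" by simp
    thus "A *v column j U = lm j *s column j U" by (simp add: lm_def vector_smult_assoc)
  qed
  have AU: "A ** U = U ** mdiag lm" by (rule eig_matrix[OF evA])
  have mu0: "\<mu> j \<noteq> 0" for j
  proof
    assume m0: "\<mu> j = 0"
    have "A *v column j U = 0" using evA m0 by (simp add: lm_def)
    hence "column j U = 0"
      by (metis BA matrix_vector_mul_assoc matrix_vector_mul_lid matrix_vector_mult_0_right)
    hence "(cadj U ** U) $ j $ j = 0"
      by (simp add: cadj_def matrix_matrix_mult_def column_def vec_eq_iff)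
    thus False using UU by (simp add: mat_def)
  qed
  define d where "d j = sqrt \<bar>\<mu> j\<bar>" for j
  have d0: "d j > 0" for j using mu0 by (simp add: d_def)
  have dd: "d j * d j = \<bar>\<mu> j\<bar>" for j by (simp add: d_def)
  define D where "D = mdiag (\<lambda>j. complex_of_real (d j))"
  define Di where "Di = mdiag (\<lambda>j. complex_of_real (1 / d j))"
  have dne: "d j \<noteq> 0" for j using d0[of j] by simp
  have DDi: "D ** Di = mat 1" "Di ** D = mat 1"
    by (simp_all add: D_def Di_def mdiag_mul mdiag_one[symmetric] of_real_mult[symmetric] dne del: of_real_mult)
  have cD: "cadj D = D" "cadj Di = Di" by (simp_all add: D_def Di_def cadj_mdiag)
  define S where "S = U ** D"
  define T where "T = Di ** cadj U"
  have ST: "S ** T = mat 1"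
  proof -
    have "S ** T = U ** (D ** Di) ** cadj U" by (simp add: S_def T_def matrix_mul_assoc)
    thus ?thesis by (simp add: DDi UU')
  qed
  have TS: "T ** S = mat 1"
  proof -
    have "T ** S = Di ** (cadj U ** U) ** D" by (simp add: S_def T_def matrix_mul_assoc)
    thus ?thesis by (simp add: DDi UU)
  qed
  have cT: "cadj T = U ** Di" by (simp add: T_def cadj_mul cD)
  have TAT: "T ** A ** cadj T = mdiag (\<lambda>j. lm j / of_real (\<bar>\<mu> j\<bar>))"
  proof -
    have "T ** A ** cadj T = Di ** (cadj U ** (A ** U)) ** Di" by (simp only: cT) (simp add: T_def matrix_mul_assoc)
    also have "\<dots> = Di ** ((cadj U ** U) ** mdiag lm) ** Di" by (simp add: AU matrix_mul_assoc)
    also have "\<dots> = mdiag (\<lambda>j. complex_of_real (1 / d j) * lm j * complex_of_real (1 / d j))"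
      by (simp add: UU Di_def mdiag_mul mult.assoc)
    also have "(\<lambda>j. complex_of_real (1 / d j) * lm j * complex_of_real (1 / d j)) = (\<lambda>j. lm j / of_real (\<bar>\<mu> j\<bar>))"
    proof
      fix j
      have "complex_of_real (\<bar>\<mu> j\<bar>) = of_real (d j) * of_real (d j)" by (simp add: dd[symmetric])
      thus "complex_of_real (1 / d j) * lm j * complex_of_real (1 / d j) = lm j / of_real (\<bar>\<mu> j\<bar>)"
        using dne[of j] by (simp add: field_simps)
    qed
    finally show ?thesis .
  qed
  have trS: "trace (S ** cadj S) = (\<Sum>j\<in>UNIV. of_real \<bar>\<mu> j\<bar>)"
  proof -
    have "S ** cadj S = U ** (D ** D ** cadj U)" by (simp add: S_def cadj_mul cD matrix_mul_assoc)
    hence "trace (S ** cadj S) = trace (U ** (D ** D ** cadj U))" by simp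
    also have "\<dots> = trace (D ** D ** cadj U ** U)" by (rule trace_mul_sym)
    also have "\<dots> = trace (D ** D)" by (simp add: matrix_mul_assoc[symmetric] UU)
    also have "\<dots> = (\<Sum>j\<in>UNIV. of_real \<bar>\<mu> j\<bar>)"
      by (simp add: D_def mdiag_mul trace_mdiag dd of_real_mult[symmetric] del: of_real_mult)
    finally show ?thesis .
  qed
  have trA: "trace (A ** cadj A) = (\<Sum>j\<in>UNIV. of_real ((\<mu> j)\<^sup>2))"
  proof -
    have A': "A = U ** mdiag lm ** cadj U"
    proof -
      have "A = A ** (U ** cadj U)" by (simp add: UU')
      also have "\<dots> = U ** mdiag lm ** cadj U" by (simp add: matrix_mul_assoc AU)
      finally show ?thesis .
    qed
    have "A ** cadj A = U ** (mdiag lm ** (cadj U ** U) ** cadj (mdiag lm) ** cadj U)"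
      by (subst (1 2) A') (simp add: cadj_mul matrix_mul_assoc)
    hence "trace (A ** cadj A) = trace (U ** (mdiag lm ** cadj (mdiag lm) ** cadj U))"
      by (simp add: UU)
    also have "\<dots> = trace (mdiag lm ** cadj (mdiag lm) ** cadj U ** U)" by (rule trace_mul_sym)
    also have "\<dots> = trace (mdiag lm ** cadj (mdiag lm))" by (simp add: matrix_mul_assoc[symmetric] UU)
    also have "\<dots> = (\<Sum>j\<in>UNIV. of_real ((\<mu> j)\<^sup>2))"
      by (simp add: cadj_mdiag mdiag_mul trace_mdiag lm_def power2_eq_square)
         (intro sum.cong refl, simp add: algebra_simps)
    finally show ?thesis .
  qed
  have "(\<Sum>j\<in>UNIV. \<bar>\<mu> j\<bar>)\<^sup>2 \<le> (\<Sum>j\<in>UNIV. \<bar>\<mu> j\<bar>\<^sup>2) * real CARD('n)"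
    by (rule sum_squared_le_sum_of_squares)
  hence "(Re (trace (S ** cadj S)))\<^sup>2 \<le> real CARD('n) * Re (trace (A ** cadj A))"
    by (simp add: trS trA mult.commute)
  moreover have "Re (trace (S ** cadj S)) \<ge> 0" by (simp add: trS sum_nonneg)
  moreover have "\<forall>a b. a \<noteq> b \<longrightarrow> (T ** A ** cadj T) $ a $ b = 0" by (simp add: TAT mdiag_def)
  moreover have "\<forall>a. (T ** A ** cadj T) $ a $ a \<in> {\<i>, - \<i>}"
  proof
    fix a
    have e: "(T ** A ** cadj T) $ a $ a = - \<i> * of_real (\<mu> a) / of_real \<bar>\<mu> a\<bar>" by (simp add: TAT mdiag_def lm_def)
    have m: "complex_of_real (\<mu> a) \<noteq> 0" using mu0[of a] by simp
    show "(T ** A ** cadj T) $ a $ a \<in> {\<i>, - \<i>}"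
    proof (cases "\<mu> a > 0")
      case True then show ?thesis using m by (simp add: e)
    next
      case False then have "\<bar>\<mu> a\<bar> = - \<mu> a" by simp
      then show ?thesis using m by (simp add: e)
    qed
  qed
  ultimately show ?thesis using ST TS by blast
qed



lemma typeIV_local:
  fixes \<alpha> :: "'r::real_algebra_1 \<Rightarrow> ('e::finite \<Rightarrow> complex^'n::finite^'n)"
  assumes iso: "iso_IV dagR \<alpha>" and db: "dagR b = - b" and bb: "b * b' = 1" "b' * b = 1"
  shows "\<exists>s t. s * t = 1 \<and> t * s = 1 \<and>
     ((\<forall>l a c. a \<noteq> c \<longrightarrow> \<alpha> (t * b * dagR t) l $ a $ c = 0) \<and>
      (\<forall>l a. \<alpha> (t * b * dagR t) l $ a $ a \<in> {\<i>, - \<i>})) \<and>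
     norm_IV dagR \<alpha> s \<le> (2 * real CARD('n) * real CARD('e)) powr (1/4) * sqrt (norm_IV dagR \<alpha> b)"
proof -
  have bij: "bij \<alpha>" and asc: "\<And>c x. \<alpha> (scaleR c x) = (\<lambda>l. scaleR c (\<alpha> x l))"
    and amul: "\<And>x y. \<alpha> (x * y) = (\<lambda>l. \<alpha> x l ** \<alpha> y l)"
    and a1: "\<alpha> 1 = (\<lambda>l. mat 1)" and adag: "\<And>x. \<alpha> (dagR x) = (\<lambda>l. cadj (\<alpha> x l))"
    using iso unfolding iso_IV_def by blast+
  have Al: "cadj (\<alpha> b l) = - \<alpha> b l \<and> \<alpha> b' l ** \<alpha> b l = mat 1" for l
  proof
    have "\<alpha> (dagR b) = \<alpha> ((-1) *\<^sub>R b)" using db by simp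
    hence "cadj (\<alpha> b l) = (-1) *\<^sub>R \<alpha> b l" using asc adag by metis
    thus "cadj (\<alpha> b l) = - \<alpha> b l" by simp
    show "\<alpha> b' l ** \<alpha> b l = mat 1" using arg_cong[OF bb(2), of \<alpha>] amul a1 by metis
  qed
  have "\<forall>l. \<exists>p. fst p ** snd p = mat 1 \<and> snd p ** fst p = mat 1 \<and>
     (\<forall>a c. a \<noteq> c \<longrightarrow> (snd p ** \<alpha> b l ** cadj (snd p)) $ a $ c = 0) \<and>
     (\<forall>a. (snd p ** \<alpha> b l ** cadj (snd p)) $ a $ a \<in> {\<i>, - \<i>}) \<and>
     Re (trace (fst p ** cadj (fst p))) \<ge> 0 \<and>
     (Re (trace (fst p ** cadj (fst p))))\<^sup>2 \<le> real CARD('n) * Re (trace (\<alpha> b l ** cadj (\<alpha> b l)))"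
  proof
    fix l
    have ex: "\<exists>S T. S ** T = mat 1 \<and> T ** S = mat 1 \<and>
     (\<forall>a c. a \<noteq> c \<longrightarrow> (T ** \<alpha> b l ** cadj T) $ a $ c = 0) \<and>
     (\<forall>a. (T ** \<alpha> b l ** cadj T) $ a $ a \<in> {\<i>, - \<i>}) \<and>
     Re (trace (S ** cadj S)) \<ge> 0 \<and>
     (Re (trace (S ** cadj S)))\<^sup>2 \<le> real CARD('n) * Re (trace (\<alpha> b l ** cadj (\<alpha> b l)))"
      using Al[of l] by (intro block_local) auto
    from ex obtain S T where
      "S ** T = mat 1 \<and> T ** S = mat 1 \<and>
     (\<forall>a c. a \<noteq> c \<longrightarrow> (T ** \<alpha> b l ** cadj T) $ a $ c = 0) \<and>
     (\<forall>a. (T ** \<alpha> b l ** cadj T) $ a $ a \<in> {\<i>, - \<i>}) \<and>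
     Re (trace (S ** cadj S)) \<ge> 0 \<and>
     (Re (trace (S ** cadj S)))\<^sup>2 \<le> real CARD('n) * Re (trace (\<alpha> b l ** cadj (\<alpha> b l)))" by (elim exE) (erule that)
    then show "\<exists>p. fst p ** snd p = mat 1 \<and> snd p ** fst p = mat 1 \<and>
     (\<forall>a c. a \<noteq> c \<longrightarrow> (snd p ** \<alpha> b l ** cadj (snd p)) $ a $ c = 0) \<and>
     (\<forall>a. (snd p ** \<alpha> b l ** cadj (snd p)) $ a $ a \<in> {\<i>, - \<i>}) \<and>
     Re (trace (fst p ** cadj (fst p))) \<ge> 0 \<and>
     (Re (trace (fst p ** cadj (fst p))))\<^sup>2 \<le> real CARD('n) * Re (trace (\<alpha> b l ** cadj (\<alpha> b l)))"
      by (intro exI[of _ "(S,T)"]) (unfold fst_conv snd_conv)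
  qed
  then obtain f where f: "\<And>l. fst (f l) ** snd (f l) = mat 1 \<and> snd (f l) ** fst (f l) = mat 1 \<and>
     (\<forall>a c. a \<noteq> c \<longrightarrow> (snd (f l) ** \<alpha> b l ** cadj (snd (f l))) $ a $ c = 0) \<and>
     (\<forall>a. (snd (f l) ** \<alpha> b l ** cadj (snd (f l))) $ a $ a \<in> {\<i>, - \<i>}) \<and>
     Re (trace (fst (f l) ** cadj (fst (f l)))) \<ge> 0 \<and>
     (Re (trace (fst (f l) ** cadj (fst (f l)))))\<^sup>2 \<le> real CARD('n) * Re (trace (\<alpha> b l ** cadj (\<alpha> b l)))"
    by metis
  define s where "s = inv \<alpha> (\<lambda>l. fst (f l))"
  define t where "t = inv \<alpha> (\<lambda>l. snd (f l))"
  have as: "\<alpha> s = (\<lambda>l. fst (f l))" unfolding s_def using bij by (simp add: bij_is_surj surj_f_inv_f)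
  have at: "\<alpha> t = (\<lambda>l. snd (f l))" unfolding t_def using bij by (simp add: bij_is_surj surj_f_inv_f)
  have inj: "inj \<alpha>" using bij bij_is_inj by blast
  have "\<alpha> (s * t) = \<alpha> 1" by (simp add: amul a1 as at f)
  hence st: "s * t = 1" using inj by (simp add: inj_eq)
  have "\<alpha> (t * s) = \<alpha> 1" by (simp add: amul a1 as at f)
  hence ts: "t * s = 1" using inj by (simp add: inj_eq)
  have "(\<forall>l a c. a \<noteq> c \<longrightarrow> \<alpha> (t * b * dagR t) l $ a $ c = 0) \<and>
      (\<forall>l a. \<alpha> (t * b * dagR t) l $ a $ a \<in> {\<i>, - \<i>})"
  proof -
    have e: "\<alpha> (t * b * dagR t) l = snd (f l) ** \<alpha> b l ** cadj (snd (f l))" for l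
      by (simp add: amul adag at)
    show ?thesis unfolding e using f by blast
  qed
  moreover have "norm_IV dagR \<alpha> s \<le> (2 * real CARD('n) * real CARD('e)) powr (1/4) * sqrt (norm_IV dagR \<alpha> b)"
  proof -
    have "sqrt (\<Sum>l\<in>UNIV. 2 * Re (trace (fst (f l) ** cadj (fst (f l)))))
      \<le> (2 * real CARD('n) * real CARD('e)) powr (1/4) * sqrt (sqrt (\<Sum>l\<in>UNIV. 2 * Re (trace (\<alpha> b l ** cadj (\<alpha> b l)))))"
      by (rule norm_ineq, simp, use f in blast, use f in blast)
    thus ?thesis unfolding norm_IV_def Trd_IV_def by (simp add: amul adag as)
  qed
  ultimately show ?thesis using st ts by blast
qed

theorem lemma2p17:
  fixes dag :: "'d::{division_ring, ring_char_0} \<Rightarrow> 'd"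
    and \<iota> :: "'d \<Rightarrow> 'r::real_algebra_1"
    and dagR :: "'r \<Rightarrow> 'r"
    and sm :: "'d \<Rightarrow> 'v::ab_group_add \<Rightarrow> 'v"
    and \<psi> :: "'v \<Rightarrow> 'v \<Rightarrow> 'd"
    and m :: nat and v :: "nat \<Rightarrow> 'v"
    and smR :: "'r \<Rightarrow> 'w::ab_group_add \<Rightarrow> 'w"
    and jV :: "'v \<Rightarrow> 'w"
    and \<psi>R :: "'w \<Rightarrow> 'w \<Rightarrow> 'r"
    and \<alpha>3 :: "'r \<Rightarrow> ('e3::finite \<Rightarrow> quat)"
    and \<alpha>4 :: "'r \<Rightarrow> ('e4::finite \<Rightarrow> complex^'n::finite^'n)"
  assumes inv: "involution dag"
    and DR: "real_scalar_extension \<iota>"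
    and dagR: "real_ext_inv dag \<iota> dagR"
    and V: "left_module sm"
    and psi: "skew_hermitian dag sm \<psi>" "nondegenerate \<psi>"
    and basis: "is_basis sm m v" "weakly_unitary \<psi> m v"
    and VR: "real_module_extension \<iota> sm smR jV m v"
    and psiR: "real_form_extension \<iota> smR jV \<psi> \<psi>R"
  shows
   "(iso_III dagR \<alpha>3 \<and> (\<forall>x. x \<noteq> 0 \<longrightarrow> Trd_III \<alpha>3 (\<iota> (x * dag x)) > 0) \<longrightarrow>
      (\<exists>s sinv :: nat \<Rightarrow> 'r.
         (\<forall>j<m. s j * sinv j = 1 \<and> sinv j * s j = 1) \<and>
         is_basis smR m (\<lambda>j. smR (sinv j) (jV (v j))) \<and>
         weakly_unitary \<psi>R m (\<lambda>j. smR (sinv j) (jV (v j))) \<and>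
         (\<forall>j<m. \<alpha>3 (\<psi>R (smR (sinv j) (jV (v j))) (smR (sinv j) (jV (v j)))) = (\<lambda>l. q_i)) \<and>
         (\<forall>j<m. norm_III dagR \<alpha>3 (s j)
                 \<le> (2 * 1 * real CARD('e3)) powr (1/4)
                    * sqrt (norm_III dagR \<alpha>3 (\<iota> (\<psi> (v j) (v j)))))))
    \<and>
    (iso_IV dagR \<alpha>4 \<and> (\<forall>x. x \<noteq> 0 \<longrightarrow> Trd_IV \<alpha>4 (\<iota> (x * dag x)) > 0) \<longrightarrow>
      (\<exists>s sinv :: nat \<Rightarrow> 'r.
         (\<forall>j<m. s j * sinv j = 1 \<and> sinv j * s j = 1) \<and>
         is_basis smR m (\<lambda>j. smR (sinv j) (jV (v j))) \<and>
         weakly_unitary \<psi>R m (\<lambda>j. smR (sinv j) (jV (v j))) \<and>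
         (\<forall>j<m. \<forall>l a b. a \<noteq> b \<longrightarrow>
             \<alpha>4 (\<psi>R (smR (sinv j) (jV (v j))) (smR (sinv j) (jV (v j)))) l $ a $ b = 0) \<and>
         (\<forall>j<m. \<forall>l a.
             \<alpha>4 (\<psi>R (smR (sinv j) (jV (v j))) (smR (sinv j) (jV (v j)))) l $ a $ a \<in> {\<i>, - \<i>}) \<and>
         (\<forall>j<m. norm_IV dagR \<alpha>4 (s j)
                 \<le> (2 * real CARD('n) * real CARD('e4)) powr (1/4)
                    * sqrt (norm_IV dagR \<alpha>4 (\<iota> (\<psi> (v j) (v j)))))))"
proof (intro conjI impI)
  assume h: "iso_III dagR \<alpha>3 \<and> (\<forall>x. x \<noteq> 0 \<longrightarrow> Trd_III \<alpha>3 (\<iota> (x * dag x)) > 0)"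
  show "\<exists>s sinv :: nat \<Rightarrow> 'r.
         (\<forall>j<m. s j * sinv j = 1 \<and> sinv j * s j = 1) \<and>
         is_basis smR m (\<lambda>j. smR (sinv j) (jV (v j))) \<and>
         weakly_unitary \<psi>R m (\<lambda>j. smR (sinv j) (jV (v j))) \<and>
         (\<forall>j<m. \<alpha>3 (\<psi>R (smR (sinv j) (jV (v j))) (smR (sinv j) (jV (v j)))) = (\<lambda>l. q_i)) \<and>
         (\<forall>j<m. norm_III dagR \<alpha>3 (s j)
                 \<le> (2 * 1 * real CARD('e3)) powr (1/4)
                    * sqrt (norm_III dagR \<alpha>3 (\<iota> (\<psi> (v j) (v j)))))"
    by (rule assemble[OF DR dagR V psi basis VR psiR, where P = "\<lambda>x. \<alpha>3 x = (\<lambda>l. q_i)"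
          and N = "\<lambda>s b. norm_III dagR \<alpha>3 s \<le> (2 * 1 * real CARD('e3)) powr (1/4) * sqrt (norm_III dagR \<alpha>3 b)"])
       (rule typeIII_local[OF conjunct1[OF h]], assumption+)
next
  assume h: "iso_IV dagR \<alpha>4 \<and> (\<forall>x. x \<noteq> 0 \<longrightarrow> Trd_IV \<alpha>4 (\<iota> (x * dag x)) > 0)"
  have "\<exists>s sinv :: nat \<Rightarrow> 'r.
         (\<forall>j<m. s j * sinv j = 1 \<and> sinv j * s j = 1) \<and>
         is_basis smR m (\<lambda>j. smR (sinv j) (jV (v j))) \<and>
         weakly_unitary \<psi>R m (\<lambda>j. smR (sinv j) (jV (v j))) \<and>
         (\<forall>j<m. (\<lambda>x. (\<forall>l a c. a \<noteq> c \<longrightarrow> \<alpha>4 x l $ a $ c = 0) \<and> (\<forall>l a. \<alpha>4 x l $ a $ a \<in> {\<i>, - \<i>}))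
             (\<psi>R (smR (sinv j) (jV (v j))) (smR (sinv j) (jV (v j))))) \<and>
         (\<forall>j<m. norm_IV dagR \<alpha>4 (s j)
                 \<le> (2 * real CARD('n) * real CARD('e4)) powr (1/4)
                    * sqrt (norm_IV dagR \<alpha>4 (\<iota> (\<psi> (v j) (v j)))))"
    by (rule assemble[OF DR dagR V psi basis VR psiR, where
          P = "\<lambda>x. (\<forall>l a c. a \<noteq> c \<longrightarrow> \<alpha>4 x l $ a $ c = 0) \<and> (\<forall>l a. \<alpha>4 x l $ a $ a \<in> {\<i>, - \<i>})"
          and N = "\<lambda>s b. norm_IV dagR \<alpha>4 s \<le> (2 * real CARD('n) * real CARD('e4)) powr (1/4) * sqrt (norm_IV dagR \<alpha>4 b)"])
       (rule typeIV_local[OF conjunct1[OF h]], assumption+)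
  then obtain s sinv :: "nat \<Rightarrow> 'r" where A:
         "(\<forall>j<m. s j * sinv j = 1 \<and> sinv j * s j = 1)"
         "is_basis smR m (\<lambda>j. smR (sinv j) (jV (v j)))"
         "weakly_unitary \<psi>R m (\<lambda>j. smR (sinv j) (jV (v j)))"
         "\<forall>j<m. (\<forall>l a c. a \<noteq> c \<longrightarrow> \<alpha>4 (\<psi>R (smR (sinv j) (jV (v j))) (smR (sinv j) (jV (v j)))) l $ a $ c = 0) \<and>
              (\<forall>l a. \<alpha>4 (\<psi>R (smR (sinv j) (jV (v j))) (smR (sinv j) (jV (v j)))) l $ a $ a \<in> {\<i>, - \<i>})"
         "\<forall>j<m. norm_IV dagR \<alpha>4 (s j)
                 \<le> (2 * real CARD('n) * real CARD('e4)) powr (1/4)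
                    * sqrt (norm_IV dagR \<alpha>4 (\<iota> (\<psi> (v j) (v j))))"
    by (elim exE conjE) (erule that, assumption+)
  show "\<exists>s sinv :: nat \<Rightarrow> 'r.
         (\<forall>j<m. s j * sinv j = 1 \<and> sinv j * s j = 1) \<and>
         is_basis smR m (\<lambda>j. smR (sinv j) (jV (v j))) \<and>
         weakly_unitary \<psi>R m (\<lambda>j. smR (sinv j) (jV (v j))) \<and>
         (\<forall>j<m. \<forall>l a b. a \<noteq> b \<longrightarrow>
             \<alpha>4 (\<psi>R (smR (sinv j) (jV (v j))) (smR (sinv j) (jV (v j)))) l $ a $ b = 0) \<and>
         (\<forall>j<m. \<forall>l a.
             \<alpha>4 (\<psi>R (smR (sinv j) (jV (v j))) (smR (sinv j) (jV (v j)))) l $ a $ a \<in> {\<i>, - \<i>}) \<and>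
         (\<forall>j<m. norm_IV dagR \<alpha>4 (s j)
                 \<le> (2 * real CARD('n) * real CARD('e4)) powr (1/4)
                    * sqrt (norm_IV dagR \<alpha>4 (\<iota> (\<psi> (v j) (v j)))))"
    apply (rule exI[of _ s], rule exI[of _ sinv])
    apply (intro conjI)
    using A by auto
qed

end
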